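(* Let $S$ be a right non-degenerate semigroup of skew type. Then $S$ satisfies the ascending chain condition on right ideals.
   Context: A semigroup of skew type is a monoid $S$ with a monoid presentation $S=\langle x_1,\ldots,x_n \mid x_ix_j=x_kx_l\rangle$ consisting of $\binom{n}{2}$ relations, each of the form $x_ix_j=x_kx_l$ with $i\neq j$, $k\neq l$, such that every word $x_px_q$ with $p\neq q$ appears (as one side) in exactly one of the relations; $X=\{x_1,\ldots,x_n\}$. For $a,b\in X$, the partner of $ab$ is the other side of the unique defining relation containing $ab$ if $a\neq b$, and $ab$ itself if $a=b$. $S$ is right non-degenerate if for every $x\in X$ the map $X\to X$ sending $y$ to the first letter of the partner of $xy$ is surjective. *)

theory Defs
  imports Main
begin

text \<open>Generators are the elements of a finite type 'a; words are lists over 'a.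
A set of defining relations is a set of pairs of two-letter words
((i,j),(k,l)) standing for the relation x_i x_j = x_k x_l.\<close>

type_synonym 'a skew_rels = "(('a \<times> 'a) \<times> ('a \<times> 'a)) set"

definition skew_type_rels :: "'a::finite skew_rels \<Rightarrow> bool" where
  "skew_type_rels R \<longleftrightarrow>
     card R = card (UNIV :: 'a set) choose 2 \<and>
     (\<forall>((i,j),(k,l)) \<in> R. i \<noteq> j \<and> k \<noteq> l) \<and>
     (\<forall>p q. p \<noteq> q \<longrightarrow> (\<exists>!rel. rel \<in> R \<and> (fst rel = (p,q) \<or> snd rel = (p,q))))"

definition pres_step :: "'a skew_rels \<Rightarrow> ('a list \<times> 'a list) set" where
  "pres_step R = {(u @ [a,b] @ v, u @ [c,d] @ v) | u v a b c d. ((a,b),(c,d)) \<in> R}"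

definition pres_cong :: "'a skew_rels \<Rightarrow> ('a list \<times> 'a list) set" where
  "pres_cong R = (pres_step R \<union> (pres_step R)\<inverse>)\<^sup>*"

definition pres_monoid :: "'a skew_rels \<Rightarrow> 'a list set set" where
  "pres_monoid R = UNIV // pres_cong R"

definition pres_mult :: "'a skew_rels \<Rightarrow> 'a list set \<Rightarrow> 'a list set \<Rightarrow> 'a list set" where
  "pres_mult R s t = (\<Union>x\<in>s. \<Union>y\<in>t. pres_cong R `` {x @ y})"

definition right_ideal :: "'a skew_rels \<Rightarrow> 'a list set set \<Rightarrow> bool" where
  "right_ideal R I \<longleftrightarrow> I \<subseteq> pres_monoid R \<and>
     (\<forall>s\<in>I. \<forall>t\<in>pres_monoid R. pres_mult R s t \<in> I)"

definition acc_right_ideals :: "'a skew_rels \<Rightarrow> bool" where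
  "acc_right_ideals R \<longleftrightarrow>
     (\<forall>f :: nat \<Rightarrow> 'a list set set.
        (\<forall>n. right_ideal R (f n)) \<and> (\<forall>n. f n \<subseteq> f (Suc n)) \<longrightarrow>
        (\<exists>N. \<forall>m\<ge>N. f m = f N))"

definition partner :: "'a skew_rels \<Rightarrow> 'a \<times> 'a \<Rightarrow> 'a \<times> 'a" where
  "partner R w = (if fst w = snd w then w
     else (THE w'. (w, w') \<in> R \<or> (w', w) \<in> R))"

definition right_nondegenerate :: "'a skew_rels \<Rightarrow> bool" where
  "right_nondegenerate R \<longleftrightarrow> (\<forall>x. surj (\<lambda>y. fst (partner R (x, y))))"

end

theory Submission
  imports Defs "HOL-Library.Infinite_Set"
begin

lemma pres_step_ctx:
  assumes "(a, b) \<in> pres_step R"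
  shows "(u @ a @ v, u @ b @ v) \<in> pres_step R"
proof -
  from assms obtain u' v' x y c d where
    a: "a = u' @ [x,y] @ v'" and b: "b = u' @ [c,d] @ v'" and r: "((x,y),(c,d)) \<in> R"
    unfolding pres_step_def by blast
  have "u @ a @ v = (u @ u') @ [x,y] @ (v' @ v)" "u @ b @ v = (u @ u') @ [c,d] @ (v' @ v)"
    using a b by simp_all
  then show ?thesis using r unfolding pres_step_def by blast
qed

lemma pres_cong_ctx:
  assumes "(a, b) \<in> pres_cong R"
  shows "(u @ a @ v, u @ b @ v) \<in> pres_cong R"
  using assms unfolding pres_cong_def
proof (induction rule: rtrancl_induct)
  case base
  then show ?case by simp
next
  case (step y z)
  have "(u @ y @ v, u @ z @ v) \<in> pres_step R \<union> (pres_step R)\<inverse>"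
  proof (cases "(y, z) \<in> pres_step R")
    case True
    then show ?thesis using pres_step_ctx[of y z R u v] by simp
  next
    case False
    then have "(z, y) \<in> pres_step R" using step(2) by simp
    then show ?thesis using pres_step_ctx[of z y R u v] by simp
  qed
  then show ?case using step(3) by (rule rtrancl.rtrancl_into_rtrancl[rotated])
qed

lemma pres_cong_refl: "(a, a) \<in> pres_cong R"
  unfolding pres_cong_def by simp

lemma pres_cong_sym:
  assumes "(a, b) \<in> pres_cong R" shows "(b, a) \<in> pres_cong R"
proof -
  have "(b, a) \<in> ((pres_step R \<union> (pres_step R)\<inverse>)\<inverse>)\<^sup>*"
    using assms unfolding pres_cong_def by (simp add: rtrancl_converseI)
  moreover have "(pres_step R \<union> (pres_step R)\<inverse>)\<inverse> = pres_step R \<union> (pres_step R)\<inverse>" by auto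
  ultimately show ?thesis unfolding pres_cong_def by simp
qed

lemma pres_cong_trans:
  assumes "(a, b) \<in> pres_cong R" "(b, c) \<in> pres_cong R" shows "(a, c) \<in> pres_cong R"
  using assms unfolding pres_cong_def by simp

lemma pres_cong_equiv: "equiv UNIV (pres_cong R)"
proof (rule equivI)
  show "refl_on UNIV (pres_cong R)" unfolding refl_on_def using pres_cong_refl by blast
  show "sym (pres_cong R)" by (rule symI) (rule pres_cong_sym)
  show "trans (pres_cong R)" by (rule transI) (rule pres_cong_trans)
qed simp

lemma pres_cong_app:
  assumes "(a, b) \<in> pres_cong R" "(c, d) \<in> pres_cong R"
  shows "(a @ c, b @ d) \<in> pres_cong R"
proof -
  have "([] @ a @ c, [] @ b @ c) \<in> pres_cong R" using assms(1) pres_cong_ctx by blast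
  moreover have "(b @ c @ [], b @ d @ []) \<in> pres_cong R" using assms(2) pres_cong_ctx by blast
  ultimately show ?thesis using pres_cong_trans by fastforce
qed

lemma pres_mult_class:
  "pres_mult R (pres_cong R `` {a}) (pres_cong R `` {b}) = pres_cong R `` {a @ b}"
proof
  show "pres_mult R (pres_cong R `` {a}) (pres_cong R `` {b}) \<subseteq> pres_cong R `` {a @ b}"
  proof
    fix z assume "z \<in> pres_mult R (pres_cong R `` {a}) (pres_cong R `` {b})"
    then obtain x y where x: "(a, x) \<in> pres_cong R" and y: "(b, y) \<in> pres_cong R"
      and z: "(x @ y, z) \<in> pres_cong R"
      unfolding pres_mult_def by auto
    have "(a @ b, x @ y) \<in> pres_cong R" using pres_cong_app x y by blast
    then show "z \<in> pres_cong R `` {a @ b}" using z pres_cong_trans by blast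
  qed
next
  show "pres_cong R `` {a @ b} \<subseteq> pres_mult R (pres_cong R `` {a}) (pres_cong R `` {b})"
    unfolding pres_mult_def using pres_cong_refl by blast
qed

definition sg :: "'a skew_rels \<Rightarrow> 'a \<Rightarrow> 'a \<Rightarrow> 'a" where
  "sg R x y = fst (partner R (x, y))"

definition tu :: "'a skew_rels \<Rightarrow> 'a \<Rightarrow> 'a \<Rightarrow> 'a" where
  "tu R x y = snd (partner R (x, y))"

lemma partner_cong:
  assumes sk: "skew_type_rels R"
  shows "([x, y], [sg R x y, tu R x y]) \<in> pres_cong R"
proof (cases "x = y")
  case True
  then have "partner R (x, y) = (x, y)" unfolding partner_def by simp
  then show ?thesis unfolding sg_def tu_def using pres_cong_refl by (metis fst_conv snd_conv)
next
  case False
  let ?P = "\<lambda>w'. ((x, y), w') \<in> R \<or> (w', (x, y)) \<in> R"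
  from sk False obtain rel where rel: "rel \<in> R" "fst rel = (x, y) \<or> snd rel = (x, y)"
    and uq: "\<And>r. r \<in> R \<and> (fst r = (x, y) \<or> snd r = (x, y)) \<Longrightarrow> r = rel"
    unfolding skew_type_rels_def by metis
  have ex: "\<exists>w'. ?P w'"
  proof (cases "fst rel = (x, y)")
    case True
    then have "((x, y), snd rel) \<in> R" using rel(1) by (metis prod.collapse)
    then show ?thesis by blast
  next
    case False
    then have "snd rel = (x, y)" using rel(2) by simp
    then have "(fst rel, (x, y)) \<in> R" using rel(1) by (metis prod.collapse)
    then show ?thesis by blast
  qed
  have un: "\<And>w1 w2. ?P w1 \<Longrightarrow> ?P w2 \<Longrightarrow> w1 = w2"
  proof -
    fix w1 w2 assume h1: "?P w1" and h2: "?P w2"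
    from h1 obtain r1 where r1: "r1 \<in> R" "r1 = ((x,y),w1) \<or> r1 = (w1,(x,y))" by blast
    from h2 obtain r2 where r2: "r2 \<in> R" "r2 = ((x,y),w2) \<or> r2 = (w2,(x,y))" by blast
    have "r1 = rel" by (rule uq) (use r1 in auto)
    moreover have "r2 = rel" by (rule uq) (use r2 in auto)
    ultimately have "r1 = r2" by simp
    then show "w1 = w2" using r1(2) r2(2) by auto
  qed
  have "\<exists>!w'. ?P w'" using ex un by blast
  then have P: "?P (THE w'. ?P w')" by (rule theI')
  have pe: "partner R (x, y) = (THE w'. ?P w')" unfolding partner_def using False by simp
  obtain c d where cd: "partner R (x, y) = (c, d)" by fastforce
  have "((x, y), (c, d)) \<in> R \<or> ((c, d), (x, y)) \<in> R" using P pe cd by simp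
  then have "([x, y], [c, d]) \<in> pres_step R \<union> (pres_step R)\<inverse>"
  proof
    assume "((x, y), (c, d)) \<in> R"
    then have "([] @ [x, y] @ [], [] @ [c, d] @ []) \<in> pres_step R" unfolding pres_step_def by blast
    then show ?thesis by simp
  next
    assume "((c, d), (x, y)) \<in> R"
    then have "([] @ [c, d] @ [], [] @ [x, y] @ []) \<in> pres_step R" unfolding pres_step_def by blast
    then show ?thesis by simp
  qed
  then have "([x, y], [c, d]) \<in> pres_cong R" unfolding pres_cong_def by blast
  then show ?thesis unfolding sg_def tu_def using cd by simp
qed

section \<open>Pushed letters\<close>

fun sig :: "'a skew_rels \<Rightarrow> 'a list \<Rightarrow> 'a \<Rightarrow> 'a" where
  "sig R [] = id"
| "sig R (a # u) = sg R a \<circ> sig R u"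

fun dl :: "'a skew_rels \<Rightarrow> 'a list \<Rightarrow> 'a set" where
  "dl R [] = {}"
| "dl R (a # w) = insert a (sg R a ` dl R w)"

lemma dl_append: "dl R (u @ v) = dl R u \<union> sig R u ` dl R v"
  by (induction u) (auto simp: image_Un image_comp)

lemma sig_inj:
  assumes "right_nondegenerate R"
  shows "inj (sig R (u :: ('a::finite) list))"
proof (induction u)
  case Nil
  then show ?case by simp
next
  case (Cons a u)
  have "inj (sg R a)"
    using assms unfolding right_nondegenerate_def sg_def
    by (intro finite_UNIV_surj_inj) auto
  then have "inj (sg R a \<circ> sig R u)" using Cons inj_compose by blast
  then show ?case by (simp only: sig.simps)
qed

lemma front:
  assumes sk: "skew_type_rels R"
  shows "c \<in> dl R w \<Longrightarrow> \<exists>g. (w, c # g) \<in> pres_cong R"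
proof (induction w arbitrary: c)
  case Nil
  then show ?case by simp
next
  case (Cons a w)
  show ?case
  proof (cases "c = a")
    case True
    then show ?thesis using pres_cong_refl by blast
  next
    case False
    then obtain c' where c': "c' \<in> dl R w" "c = sg R a c'" using Cons.prems by auto
    obtain g where g: "(w, c' # g) \<in> pres_cong R" using Cons.IH c'(1) by blast
    have 1: "([a] @ w @ [], [a] @ (c' # g) @ []) \<in> pres_cong R"
      using pres_cong_ctx[OF g] by blast
    have "([] @ [a, c'] @ g, [] @ [sg R a c', tu R a c'] @ g) \<in> pres_cong R"
      using pres_cong_ctx[OF partner_cong[OF sk]] by blast
    then have 2: "(a # c' # g, c # tu R a c' # g) \<in> pres_cong R" using c'(2) by simp
    have "(a # w, c # tu R a c' # g) \<in> pres_cong R"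
      using pres_cong_trans[OF _ 2] 1 by simp
    then show ?thesis by blast
  qed
qed

definition le_w :: "'a skew_rels \<Rightarrow> 'a list \<Rightarrow> 'a list \<Rightarrow> bool" where
  "le_w R u v \<longleftrightarrow> (\<exists>g. (u @ g, v) \<in> pres_cong R)"

lemma discrete_step:
  assumes "P (0::nat)" "\<not> P n"
  shows "\<exists>i<n. P i \<and> \<not> P (Suc i)"
  using assms
proof (induction n)
  case 0
  then show ?case by simp
next
  case (Suc n)
  then show ?case by (cases "P n") (auto intro: less_SucI)
qed

lemma main_lemma:
  fixes R :: "'a::finite skew_rels"
  assumes sk: "skew_type_rels R" and rn: "right_nondegenerate R"
  shows "\<forall>f :: nat \<Rightarrow> 'a list. (\<forall>j v. (f j, v) \<in> pres_cong R \<longrightarrow> dl R v \<subseteq> L) \<longrightarrow>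
            (\<exists>i j. i < j \<and> le_w R (f i) (f j))"
proof (induction "card L" arbitrary: L rule: less_induct)
  case less
  show ?case
  proof (intro allI impI)
    fix f :: "nat \<Rightarrow> 'a list"
    assume H: "\<forall>j v. (f j, v) \<in> pres_cong R \<longrightarrow> dl R v \<subseteq> L"
    show "\<exists>i j. i < j \<and> le_w R (f i) (f j)"
    proof (rule ccontr)
      assume bad: "\<not> (\<exists>i j. i < j \<and> le_w R (f i) (f j))"
      define w where "w = f 0"
      define n where "n = length w"
      have le0: "\<And>v. le_w R [] v" unfolding le_w_def using pres_cong_refl by fastforce
      have notn: "\<And>j. 0 < j \<Longrightarrow> \<not> le_w R (take n w) (f j)"
        using bad unfolding n_def w_def by auto
      have exi: "\<And>j. 0 < j \<Longrightarrow> \<exists>i<n. le_w R (take i w) (f j) \<and> \<not> le_w R (take (Suc i) w) (f j)"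
      proof -
        fix j :: nat assume "0 < j"
        then show "\<exists>i<n. le_w R (take i w) (f j) \<and> \<not> le_w R (take (Suc i) w) (f j)"
          using discrete_step[of "\<lambda>i. le_w R (take i w) (f j)" n] notn le0 by simp
      qed
      define idx where "idx j = (SOME i. i < n \<and> le_w R (take i w) (f j) \<and> \<not> le_w R (take (Suc i) w) (f j))" for j
      have idx: "\<And>j. 0 < j \<Longrightarrow> idx j < n \<and> le_w R (take (idx j) w) (f j) \<and> \<not> le_w R (take (Suc (idx j)) w) (f j)"
      proof -
        fix j :: nat assume "0 < j"
        then have "\<exists>i. i < n \<and> le_w R (take i w) (f j) \<and> \<not> le_w R (take (Suc i) w) (f j)"
          using exi by blast
        then show "idx j < n \<and> le_w R (take (idx j) w) (f j) \<and> \<not> le_w R (take (Suc (idx j)) w) (f j)"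
          unfolding idx_def by (rule someI_ex)
      qed
      have infA: "infinite {j::nat. 0 < j}"
        unfolding infinite_nat_iff_unbounded by auto
      have "idx ` {j::nat. 0 < j} \<subseteq> {..<n}" using idx by auto
      then have "finite (idx ` {j::nat. 0 < j})" using finite_subset by blast
      then obtain j0 where j0: "j0 \<in> {j::nat. 0 < j}" and infJ: "infinite {j \<in> {j::nat. 0 < j}. idx j = idx j0}"
        using pigeonhole_infinite[OF infA] by blast
      define i where "i = idx j0"
      define J where "J = {j \<in> {j::nat. 0 < j}. idx j = i}"
      have infJ': "infinite J" using infJ unfolding J_def i_def by simp
      define e where "e = enumerate J"
      have eJ: "\<And>k. e k \<in> J" unfolding e_def using enumerate_in_set[OF infJ'] by blast
      have emono: "\<And>k k'. k < k' \<Longrightarrow> e k < e k'" unfolding e_def using enumerate_mono[OF _ infJ'] by blast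
      have iltn: "i < n" using idx j0 unfolding i_def by blast
      define u where "u = take i w"
      have ej: "\<And>k. 0 < e k \<and> idx (e k) = i" using eJ unfolding J_def by blast
      have lek: "\<And>k. le_w R u (f (e k))" using idx ej unfolding u_def by metis
      have nlek: "\<And>k. \<not> le_w R (take (Suc i) w) (f (e k))" using idx ej by metis
      define h where "h k = (SOME g. (u @ g, f (e k)) \<in> pres_cong R)" for k
      have hk: "\<And>k. (u @ h k, f (e k)) \<in> pres_cong R"
      proof -
        fix k
        have "\<exists>g. (u @ g, f (e k)) \<in> pres_cong R" using lek[of k] unfolding le_w_def .
        then show "(u @ h k, f (e k)) \<in> pres_cong R" unfolding h_def by (rule someI_ex)
      qed
      define L' where "L' = sig R u -` L - {w ! i}"
      have wi: "w = u @ (w ! i) # drop (Suc i) w"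
        unfolding u_def using iltn n_def id_take_nth_drop by blast
      have "dl R w \<subseteq> L" using H pres_cong_refl unfolding w_def by blast
      then have "sig R u (w ! i) \<in> L" using wi dl_append[of R u "(w ! i) # drop (Suc i) w"] by auto
      then have wiL: "w ! i \<in> sig R u -` L" by simp
      have "card (sig R u -` L) = card L"
        using sig_inj[OF rn, of u] finite_UNIV_inj_surj[OF _ sig_inj[OF rn, of u]]
        by (intro card_vimage_inj) auto
      moreover have "card (sig R u -` L - {w ! i}) < card (sig R u -` L)"
        using card_Diff1_less[OF finite wiL] .
      ultimately have cardL': "card L' < card L"
        unfolding L'_def by simp
      have HL': "\<forall>k v. (h k, v) \<in> pres_cong R \<longrightarrow> dl R v \<subseteq> L'"
      proof (intro allI impI)
        fix k v assume hv: "(h k, v) \<in> pres_cong R"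
        have "(u @ h k, u @ v) \<in> pres_cong R" using pres_cong_app[OF pres_cong_refl hv] .
        then have fv: "(f (e k), u @ v) \<in> pres_cong R"
          using hk pres_cong_sym pres_cong_trans by blast
        then have "dl R (u @ v) \<subseteq> L" using H by blast
        then have s1: "dl R v \<subseteq> sig R u -` L" using dl_append[of R u v] by auto
        have "w ! i \<notin> dl R v"
        proof
          assume "w ! i \<in> dl R v"
          then obtain g where g: "(v, (w ! i) # g) \<in> pres_cong R" using front[OF sk] by blast
          have "(u @ v, u @ (w ! i) # g) \<in> pres_cong R" using pres_cong_app[OF pres_cong_refl g] .
          moreover have "u @ (w ! i) # g = take (Suc i) w @ g"
            unfolding u_def using iltn n_def by (simp add: take_Suc_conv_app_nth)
          ultimately have "(take (Suc i) w @ g, f (e k)) \<in> pres_cong R"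
            using fv pres_cong_sym pres_cong_trans by metis
          then show False using nlek unfolding le_w_def by blast
        qed
        then show "dl R v \<subseteq> L'" using s1 unfolding L'_def by blast
      qed
      obtain k k' where kk: "k < k'" "le_w R (h k) (h k')"
        using mp[OF spec[OF less(1)[OF cardL'], of h] HL'] by blast
      then obtain g where g: "(h k @ g, h k') \<in> pres_cong R" unfolding le_w_def by blast
      have "(u @ h k @ g, u @ h k') \<in> pres_cong R" using pres_cong_app[OF pres_cong_refl g] .
      moreover have "(f (e k) @ g, u @ h k @ g) \<in> pres_cong R"
        using pres_cong_app[OF pres_cong_sym[OF hk] pres_cong_refl] by simp
      ultimately have "(f (e k) @ g, f (e k')) \<in> pres_cong R"
        using hk pres_cong_trans by blast
      then have "le_w R (f (e k)) (f (e k'))" unfolding le_w_def by blast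
      then show False using bad emono[OF kk(1)] by blast
    qed
  qed
qed

theorem proposition4p2:
  fixes R :: "'a::finite skew_rels"
  assumes "skew_type_rels R"
    and "right_nondegenerate R"
  shows "acc_right_ideals R"
  unfolding acc_right_ideals_def
proof (intro allI impI)
  fix F :: "nat \<Rightarrow> 'a list set set"
  assume A: "(\<forall>n. right_ideal R (F n)) \<and> (\<forall>n. F n \<subseteq> F (Suc n))"
  have ri: "\<And>n. right_ideal R (F n)" using A by blast
  have FS: "\<And>n. F n \<subseteq> F (Suc n)" using A by blast
  have Fmono: "\<And>a b. a \<le> b \<Longrightarrow> F a \<subseteq> F b"
  proof -
    fix a b :: nat assume "a \<le> b"
    then show "F a \<subseteq> F b" using lift_Suc_mono_le[of F, OF FS] by blast
  qed
  show "\<exists>N. \<forall>m\<ge>N. F m = F N"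
  proof (rule ccontr)
    assume ns: "\<not> (\<exists>N. \<forall>m\<ge>N. F m = F N)"
    have nx: "\<And>N. \<exists>m. N < m \<and> F m \<noteq> F N"
    proof -
      fix N
      obtain m where "m \<ge> N" "F m \<noteq> F N" using ns by blast
      then show "\<exists>m. N < m \<and> F m \<noteq> F N" using le_neq_implies_less by blast
    qed
    define gg where "gg = rec_nat 0 (\<lambda>_ k. SOME m. k < m \<and> F m \<noteq> F k)"
    have ggS: "\<And>k. gg (Suc k) = (SOME m. gg k < m \<and> F m \<noteq> F (gg k))" unfolding gg_def by simp
    have ggP: "\<And>k. gg k < gg (Suc k) \<and> F (gg (Suc k)) \<noteq> F (gg k)"
    proof -
      fix k
      show "gg k < gg (Suc k) \<and> F (gg (Suc k)) \<noteq> F (gg k)"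
        unfolding ggS using nx[of "gg k"] by (rule someI_ex)
    qed
    have ggle: "\<And>k. gg k \<le> gg (Suc k)" using ggP less_imp_le by blast
    have ggmono: "\<And>a b. a \<le> b \<Longrightarrow> gg a \<le> gg b"
    proof -
      fix a b :: nat assume "a \<le> b"
      then show "gg a \<le> gg b" using lift_Suc_mono_le[of gg, OF ggle] by blast
    qed
    have ex_t: "\<And>k. \<exists>t. t \<in> F (gg (Suc k)) \<and> t \<notin> F (gg k)"
    proof -
      fix k
      have "F (gg k) \<subseteq> F (gg (Suc k))" using Fmono[OF ggle[of k]] .
      moreover have "F (gg (Suc k)) \<noteq> F (gg k)" using ggP[of k] by blast
      ultimately show "\<exists>t. t \<in> F (gg (Suc k)) \<and> t \<notin> F (gg k)" by blast
    qed
    define t where "t k = (SOME t. t \<in> F (gg (Suc k)) \<and> t \<notin> F (gg k))" for k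
    have tP: "\<And>k. t k \<in> F (gg (Suc k)) \<and> t k \<notin> F (gg k)"
    proof -
      fix k show "t k \<in> F (gg (Suc k)) \<and> t k \<notin> F (gg k)"
        unfolding t_def using ex_t[of k] by (rule someI_ex)
    qed
    have tM: "\<And>k. t k \<in> pres_monoid R"
    proof -
      fix k
      have "F (gg (Suc k)) \<subseteq> pres_monoid R" using ri[of "gg (Suc k)"] unfolding right_ideal_def by blast
      then show "t k \<in> pres_monoid R" using tP[of k] by blast
    qed
    have ex_f: "\<And>k. \<exists>x. t k = pres_cong R `` {x}"
    proof -
      fix k
      have "t k \<in> UNIV // pres_cong R" using tM[of k] unfolding pres_monoid_def .
      then show "\<exists>x. t k = pres_cong R `` {x}" by (elim quotientE) blast
    qed
    define f where "f k = (SOME x. t k = pres_cong R `` {x})" for k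
    have fP: "\<And>k. t k = pres_cong R `` {f k}"
    proof -
      fix k show "t k = pres_cong R `` {f k}"
        unfolding f_def using ex_f[of k] by (rule someI_ex)
    qed
    have mainl: "\<forall>f :: nat \<Rightarrow> 'a list. (\<forall>j v. (f j, v) \<in> pres_cong R \<longrightarrow> dl R v \<subseteq> UNIV) \<longrightarrow>
            (\<exists>i j. i < j \<and> le_w R (f i) (f j))"
      by (rule main_lemma[OF assms])
    have "\<exists>i j. i < j \<and> le_w R (f i) (f j)"
      using mp[OF spec[OF mainl, of f]] by simp
    then obtain i j where ij: "i < j" "le_w R (f i) (f j)" by blast
    then obtain g where g: "(f i @ g, f j) \<in> pres_cong R" unfolding le_w_def by blast
    have gM: "pres_cong R `` {g} \<in> pres_monoid R"
      unfolding pres_monoid_def by (rule quotientI) simp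
    have ti: "t i \<in> F (gg (Suc i))" using tP[of i] by blast
    have "pres_mult R (t i) (pres_cong R `` {g}) \<in> F (gg (Suc i))"
      using ri[of "gg (Suc i)"] ti gM unfolding right_ideal_def by blast
    moreover have "pres_mult R (t i) (pres_cong R `` {g}) = pres_cong R `` {f i @ g}"
      using fP[of i] pres_mult_class by simp
    ultimately have "pres_cong R `` {f i @ g} \<in> F (gg (Suc i))" by simp
    moreover have "pres_cong R `` {f i @ g} = pres_cong R `` {f j}"
      using equiv_class_eq[OF pres_cong_equiv g] .
    moreover have "F (gg (Suc i)) \<subseteq> F (gg j)"
      using Fmono[OF ggmono[OF Suc_leI[OF ij(1)]]] .
    ultimately have "t j \<in> F (gg j)" using fP[of j] by auto
    then show False using tP[of j] by blast
  qed
qed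

end
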